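(* Let $G$ be an $r$-graph, $\mathcal{P}$ a partition of $E(G)$, and $A,B\subseteq\mathbb{N}$. Suppose that for all $F,H\in\mathcal{M}'$ that are $(A,B)$-mergeable, there exist $F',H'\in\mathcal{P}$ with $F'\subseteq F$, $H'\subseteq H$ such that $F'$ and $H'$ are $(A,B)$-mergeable. Then for every $F\in\mathcal{M}'$ and every $F_0\in\mathcal{M}'$ with $F_0\subseteq F$, there is an ordering $F_1,\dots,F_s$ of the elements of $\mathcal{P}$ contained in $F\setminus F_0$ such that for every $i\in[s]$ the subgraphs $\bigcup_{j=0}^{i-1}F_j$ and $F_i$ are $\{A,B\}$-mergeable (in particular, $\bigcup_{j=0}^iF_j\in\mathcal{M}'$ for every $i$).
   Context: An $r$-graph is an $r$-uniform hypergraph; subgraphs of $G$ are identified with their edge sets, and their vertex sets are the unions of their edges. For an $r$-graph $F$ and distinct vertices $x,y$ (not necessarily in $F$), $C_F(xy)$ is the set of integers $i\geq 0$ for which there exist $i$ distinct edges $X_1,\dots,X_i$ of $F$ with $|\{x,y\}\cup\bigcup_{j=1}^iX_j|\le ri-2i+2$. For $A,B\subseteq\mathbb{N}$, two edge-disjoint subgraphs $F,H\subseteq G$ are $(A,B)$-mergeable (via $uv$) if there is a pair $uv$ with $A\subseteq C_F(uv)$ and $B\subseteq C_H(uv)$; they are $\{A,B\}$-mergeable if $F,H$ are $(A,B)$-mergeable or $H,F$ are $(A,B)$-mergeable. Given a partition $\mathcal{P}$ of $E(G)$, $\mathcal{M}'=\mathcal{M}'_{\{A,B\}}(\mathcal{P})$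 is the smallest family of subgraphs of $G$ containing all elements of $\mathcal{P}$ and closed under taking the union of two $\{A,B\}$-mergeable members (its elements are called partial $\{A,B\}$-clusters; each is a union of elements of $\mathcal{P}$). *)

theory Defs
  imports Main
begin

text \<open>An r-graph: a finite set of edges, each a vertex set of size exactly r.
  Subgraphs are identified with their edge sets.\<close>
definition r_graph :: "nat \<Rightarrow> 'v set set \<Rightarrow> bool" where
  "r_graph r G \<longleftrightarrow> finite G \<and> (\<forall>e\<in>G. finite e \<and> card e = r)"

definition edge_partition :: "'v set set \<Rightarrow> 'v set set set \<Rightarrow> bool" where
  "edge_partition G P \<longleftrightarrow> \<Union>P = G \<and> {} \<notin> P \<and>
     (\<forall>X\<in>P. \<forall>Y\<in>P. X \<noteq> Y \<longrightarrow> X \<inter> Y = {})"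

definition Cset :: "nat \<Rightarrow> 'v set set \<Rightarrow> 'v \<Rightarrow> 'v \<Rightarrow> nat set" where
  "Cset r F x y = {i. \<exists>S. S \<subseteq> F \<and> finite S \<and> card S = i \<and>
      int (card ({x, y} \<union> \<Union>S)) \<le> int r * int i - 2 * int i + 2}"

definition mergeable :: "nat \<Rightarrow> 'v set set \<Rightarrow> nat set \<Rightarrow> nat set \<Rightarrow> 'v set set \<Rightarrow> 'v set set \<Rightarrow> bool" where
  "mergeable r G A B F H \<longleftrightarrow> F \<subseteq> G \<and> H \<subseteq> G \<and> F \<inter> H = {} \<and>
     (\<exists>u\<in>\<Union>G. \<exists>v\<in>\<Union>G. u \<noteq> v \<and> A \<subseteq> Cset r F u v \<and> B \<subseteq> Cset r H u v)"

definition sym_mergeable :: "nat \<Rightarrow> 'v set set \<Rightarrow> nat set \<Rightarrow> nat set \<Rightarrow> 'v set set \<Rightarrow> 'v set set \<Rightarrow> bool" where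
  "sym_mergeable r G A B F H \<longleftrightarrow> mergeable r G A B F H \<or> mergeable r G A B H F"

text \<open>M'_{A,B}(P): smallest family containing P and closed under unions of two
  {A,B}-mergeable members (partial {A,B}-clusters).\<close>
inductive_set partial_clusters :: "nat \<Rightarrow> 'v set set \<Rightarrow> 'v set set set \<Rightarrow> nat set \<Rightarrow> nat set \<Rightarrow> 'v set set set"
  for r G P A B where
  base: "X \<in> P \<Longrightarrow> X \<in> partial_clusters r G P A B"
| merge: "F \<in> partial_clusters r G P A B \<Longrightarrow> H \<in> partial_clusters r G P A B \<Longrightarrow>
          sym_mergeable r G A B F H \<Longrightarrow> F \<union> H \<in> partial_clusters r G P A B"

end

theory Submission
  imports Defs
begin

lemma pc_props:
  assumes "F \<in> partial_clusters r G P A B" "edge_partition G P"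
  shows "F \<subseteq> G \<and> F \<noteq> {} \<and> F = \<Union>{X\<in>P. X \<subseteq> F}"
  using assms
proof (induction rule: partial_clusters.induct)
  case (base X)
  then show ?case unfolding edge_partition_def by blast
next
  case (merge F H)
  have iF: "F \<subseteq> G \<and> F \<noteq> {} \<and> F = \<Union>{X\<in>P. X \<subseteq> F}" using merge.IH(1) merge.prems by blast
  have iH: "H \<subseteq> G \<and> H \<noteq> {} \<and> H = \<Union>{X\<in>P. X \<subseteq> H}" using merge.IH(2) merge.prems by blast
  have "F \<union> H \<subseteq> \<Union>{X\<in>P. X \<subseteq> F \<union> H}"
  proof
    fix x assume "x \<in> F \<union> H"
    then have "x \<in> \<Union>{X\<in>P. X \<subseteq> F} \<or> x \<in> \<Union>{X\<in>P. X \<subseteq> H}" using iF iH by blast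
    then obtain X where "X \<in> P" "X \<subseteq> F \<union> H" "x \<in> X" by blast
    then show "x \<in> \<Union>{X\<in>P. X \<subseteq> F \<union> H}" by blast
  qed
  moreover have "\<Union>{X\<in>P. X \<subseteq> F \<union> H} \<subseteq> F \<union> H" by blast
  ultimately show ?case using iF iH by blast
qed

lemma block_meet:
  assumes "edge_partition G P" "X \<in> P" "F = \<Union>{Y\<in>P. Y \<subseteq> F}" "X \<inter> F \<noteq> {}"
  shows "X \<subseteq> F"
proof -
  obtain x where x: "x \<in> X" "x \<in> F" using assms(4) by blast
  then obtain Y where Y: "Y \<in> P" "Y \<subseteq> F" "x \<in> Y" using assms(3) by blast
  then have "X = Y" using assms(1,2) x unfolding edge_partition_def by blast
  then show ?thesis using Y by simp
qed

lemma Cset_mono: "F \<subseteq> F' \<Longrightarrow> Cset r F u v \<subseteq> Cset r F' u v"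
  unfolding Cset_def by blast

lemma merge_mono:
  assumes "sym_mergeable r G A B Y X" "Y \<subseteq> C" "C \<subseteq> G" "C \<inter> X = {}"
  shows "sym_mergeable r G A B C X"
  using assms Cset_mono[OF assms(2)] unfolding sym_mergeable_def mergeable_def by blast

lemma set_lemma: "T \<subseteq> B1 \<union> B2 \<and> T \<noteq> {} \<and> T \<noteq> B1 \<union> B2 \<Longrightarrow> \<not>(T\<inter>B1\<noteq>{} \<and> T\<inter>B1\<noteq>B1) \<Longrightarrow>
  \<not>(T\<inter>B2\<noteq>{} \<and> T\<inter>B2\<noteq>B2) \<Longrightarrow> B1\<inter>B2={} \<Longrightarrow> T = B1 \<or> T = B2"
proof -
  assume a: "T \<subseteq> B1 \<union> B2 \<and> T \<noteq> {} \<and> T \<noteq> B1 \<union> B2" and b: "\<not>(T\<inter>B1\<noteq>{} \<and> T\<inter>B1\<noteq>B1)"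
    and c: "\<not>(T\<inter>B2\<noteq>{} \<and> T\<inter>B2\<noteq>B2)" and "B1\<inter>B2={}"
  have eq: "T = (T \<inter> B1) \<union> (T \<inter> B2)" using a by blast
  from b have b': "T \<inter> B1 = {} \<or> T \<inter> B1 = B1" by blast
  from c have c': "T \<inter> B2 = {} \<or> T \<inter> B2 = B2" by blast
  show ?thesis using b' c' eq a by (elim disjE) simp_all
qed

definition blocks :: "'v set set set \<Rightarrow> 'v set set \<Rightarrow> 'v set set set" where
  "blocks P F = {X\<in>P. X \<subseteq> F}"

lemma pc_conn:
  assumes "F \<in> partial_clusters r G P A B" "edge_partition G P"
    and hyp: "\<forall>F\<in>partial_clusters r G P A B. \<forall>H\<in>partial_clusters r G P A B.
           mergeable r G A B F H \<longrightarrow>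
           (\<exists>F'\<in>P. \<exists>H'\<in>P. F' \<subseteq> F \<and> H' \<subseteq> H \<and> mergeable r G A B F' H')"
  shows "\<forall>T. T \<subseteq> blocks P F \<and> T \<noteq> {} \<and> T \<noteq> blocks P F \<longrightarrow>
           (\<exists>Y\<in>T. \<exists>X\<in>blocks P F - T. sym_mergeable r G A B Y X)"
  using assms(1)
proof (induction rule: partial_clusters.induct)
  case (base X)
  have "blocks P X = {X}"
  proof
    show "{X} \<subseteq> blocks P X" using base unfolding blocks_def by auto
    show "blocks P X \<subseteq> {X}"
    proof
      fix Z assume "Z \<in> blocks P X"
      then have "Z \<in> P" "Z \<subseteq> X" unfolding blocks_def by auto
      moreover have "Z \<noteq> {}" using \<open>Z \<in> P\<close> assms(2) unfolding edge_partition_def by auto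
      moreover have "\<forall>X\<in>P. \<forall>Y\<in>P. X \<noteq> Y \<longrightarrow> X \<inter> Y = {}" using assms(2) unfolding edge_partition_def by blast
      ultimately show "Z \<in> {X}" using base by blast
    qed
  qed
  then show ?case by (metis subset_singletonD)
next
  case (merge F1 F2)
  have disj: "F1 \<inter> F2 = {}" using merge.hyps(3) unfolding sym_mergeable_def mergeable_def by blast
  have p1: "F1 = \<Union>{X\<in>P. X \<subseteq> F1}" using pc_props[OF merge.hyps(1) assms(2)] by blast
  have p2: "F2 = \<Union>{X\<in>P. X \<subseteq> F2}" using pc_props[OF merge.hyps(2) assms(2)] by blast
  have ne: "\<And>Z. Z \<in> P \<Longrightarrow> Z \<noteq> {}" using assms(2) unfolding edge_partition_def by auto
  have bU: "blocks P (F1 \<union> F2) = blocks P F1 \<union> blocks P F2"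
  proof
    show "blocks P (F1 \<union> F2) \<subseteq> blocks P F1 \<union> blocks P F2"
    proof
      fix Z assume Z: "Z \<in> blocks P (F1 \<union> F2)"
      then have ZP: "Z \<in> P" and Zs: "Z \<subseteq> F1 \<union> F2" unfolding blocks_def by auto
      have "Z \<inter> F1 \<noteq> {} \<or> Z \<inter> F2 \<noteq> {}" using Zs ne[OF ZP] by blast
      then have "Z \<subseteq> F1 \<or> Z \<subseteq> F2" using block_meet[OF assms(2) ZP p1] block_meet[OF assms(2) ZP p2] by blast
      then show "Z \<in> blocks P F1 \<union> blocks P F2" using ZP unfolding blocks_def by auto
    qed
    show "blocks P F1 \<union> blocks P F2 \<subseteq> blocks P (F1 \<union> F2)" unfolding blocks_def by auto
  qed
  have bD: "blocks P F1 \<inter> blocks P F2 = {}" using disj ne unfolding blocks_def by blast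
  obtain Y1 Y2 where Y: "Y1 \<in> blocks P F1" "Y2 \<in> blocks P F2" "sym_mergeable r G A B Y1 Y2"
  proof -
    from merge.hyps(3) show ?thesis
      unfolding sym_mergeable_def
    proof
      assume "mergeable r G A B F1 F2"
      then obtain F' H' where "F' \<in> P" "H' \<in> P" "F' \<subseteq> F1" "H' \<subseteq> F2" "mergeable r G A B F' H'"
        using hyp merge.hyps(1,2) by blast
      then show ?thesis using that unfolding blocks_def sym_mergeable_def by blast
    next
      assume "mergeable r G A B F2 F1"
      then obtain F' H' where "F' \<in> P" "H' \<in> P" "F' \<subseteq> F2" "H' \<subseteq> F1" "mergeable r G A B F' H'"
        using hyp merge.hyps(1,2) by blast
      then show ?thesis using that unfolding blocks_def sym_mergeable_def by blast
    qed
  qed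
  have symm: "\<And>X Y. sym_mergeable r G A B X Y \<Longrightarrow> sym_mergeable r G A B Y X"
    unfolding sym_mergeable_def by blast
  show ?case
  proof (intro allI impI)
    fix T assume T: "T \<subseteq> blocks P (F1 \<union> F2) \<and> T \<noteq> {} \<and> T \<noteq> blocks P (F1 \<union> F2)"
    show "\<exists>Y\<in>T. \<exists>X\<in>blocks P (F1 \<union> F2) - T. sym_mergeable r G A B Y X"
    proof (cases "T \<inter> blocks P F1 \<noteq> {} \<and> T \<inter> blocks P F1 \<noteq> blocks P F1")
      case True
      then obtain Y X where "Y \<in> T \<inter> blocks P F1" "X \<in> blocks P F1 - T \<inter> blocks P F1"
        "sym_mergeable r G A B Y X" using merge.IH(1)[rule_format, of "T \<inter> blocks P F1"] True by blast
      then show ?thesis using bU by blast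
    next
      case c1: False
      show ?thesis
      proof (cases "T \<inter> blocks P F2 \<noteq> {} \<and> T \<inter> blocks P F2 \<noteq> blocks P F2")
        case True
        then obtain Y X where "Y \<in> T \<inter> blocks P F2" "X \<in> blocks P F2 - T \<inter> blocks P F2"
          "sym_mergeable r G A B Y X" using merge.IH(2)[rule_format, of "T \<inter> blocks P F2"] True by blast
        then show ?thesis using bU by blast
      next
        case c2: False
        have "(T = blocks P F1) \<or> (T = blocks P F2)"
          using set_lemma[OF T[unfolded bU] c1 c2 bD] .
        then show ?thesis
        proof
          assume TB: "T = blocks P F1"
          have "Y2 \<in> blocks P (F1 \<union> F2) - T" using TB Y(2) bU bD by blast
          then show ?thesis using Y(1,3) TB by blast
        next
          assume TB: "T = blocks P F2"
          have "Y1 \<in> blocks P (F1 \<union> F2) - T" using TB Y(1) bU bD by blast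
          then show ?thesis using Y(2) symm[OF Y(3)] TB by blast
        qed
      qed
    qed
  qed
qed

lemma greedy:
  assumes "r_graph r G" "edge_partition G P" "F \<in> partial_clusters r G P A B"
    and hyp: "\<forall>F\<in>partial_clusters r G P A B. \<forall>H\<in>partial_clusters r G P A B.
           mergeable r G A B F H \<longrightarrow>
           (\<exists>F'\<in>P. \<exists>H'\<in>P. F' \<subseteq> F \<and> H' \<subseteq> H \<and> mergeable r G A B F' H')"
  shows "n = card {X\<in>P. X \<subseteq> F - F0} \<Longrightarrow> F0 \<in> partial_clusters r G P A B \<Longrightarrow> F0 \<subseteq> F \<Longrightarrow>
           (\<exists>Fs. distinct Fs \<and> set Fs = {X\<in>P. X \<subseteq> F - F0} \<and>
              (\<forall>i<length Fs.
                 sym_mergeable r G A B (F0 \<union> \<Union>(set (take i Fs))) (Fs ! i) \<and>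
                 F0 \<union> \<Union>(set (take (Suc i) Fs)) \<in> partial_clusters r G P A B))"
proof (induction n arbitrary: F0 rule: less_induct)
  case (less n C)
  have finP: "finite P" using assms(1,2) unfolding r_graph_def edge_partition_def
    using finite_UnionD by blast
  have ne: "\<And>Z. Z \<in> P \<Longrightarrow> Z \<noteq> {}" using assms(2) unfolding edge_partition_def by auto
  have disjP: "\<And>X Y. X \<in> P \<Longrightarrow> Y \<in> P \<Longrightarrow> X \<noteq> Y \<Longrightarrow> X \<inter> Y = {}"
    using assms(2) unfolding edge_partition_def by auto
  show ?case
  proof (cases "{X\<in>P. X \<subseteq> F - C} = {}")
    case True
    then show ?thesis by (intro exI[of _ "[]"]) simp
  next
    case False
    then obtain X0 where X0: "X0 \<in> P" "X0 \<subseteq> F - C" by blast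
    have pC: "C \<subseteq> G \<and> C \<noteq> {} \<and> C = \<Union>{X\<in>P. X \<subseteq> C}" using pc_props[OF less.prems(2) assms(2)] .
    have pF: "F = \<Union>{X\<in>P. X \<subseteq> F}" using pc_props[OF assms(3,2)] by blast
    note conn = pc_conn[OF assms(3,2) hyp]
    have Tsub: "blocks P C \<subseteq> blocks P F" using less.prems(3) unfolding blocks_def by auto
    have Tne: "blocks P C \<noteq> {}" using pC unfolding blocks_def by blast
    have Tpr: "blocks P C \<noteq> blocks P F"
    proof
      assume "blocks P C = blocks P F"
      moreover have "X0 \<in> blocks P F" using X0 unfolding blocks_def by auto
      ultimately have "X0 \<subseteq> C" unfolding blocks_def by auto
      then show False using X0 ne by blast
    qed
    obtain Y X where YX: "Y \<in> blocks P C" "X \<in> blocks P F - blocks P C" "sym_mergeable r G A B Y X"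
      using conn Tsub Tne Tpr by meson
    have XP: "X \<in> P" and XF: "X \<subseteq> F" and XnC: "\<not> X \<subseteq> C" using YX(2) unfolding blocks_def by auto
    have XC: "X \<inter> C = {}" using block_meet[OF assms(2) XP] pC XnC by blast
    have sm: "sym_mergeable r G A B C X"
      using merge_mono[OF YX(3) _ _] YX(1) pC XC unfolding blocks_def by blast
    have C'M: "C \<union> X \<in> partial_clusters r G P A B"
      using partial_clusters.merge[OF less.prems(2) partial_clusters.base[OF XP] sm] .
    have C'F: "C \<union> X \<subseteq> F" using less.prems(3) XF by blast
    have setEq: "{Z\<in>P. Z \<subseteq> F - (C \<union> X)} = {Z\<in>P. Z \<subseteq> F - C} - {X}"
    proof
      show "{Z\<in>P. Z \<subseteq> F - (C \<union> X)} \<subseteq> {Z\<in>P. Z \<subseteq> F - C} - {X}" using ne XP by blast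
      show "{Z\<in>P. Z \<subseteq> F - C} - {X} \<subseteq> {Z\<in>P. Z \<subseteq> F - (C \<union> X)}" using disjP XP by blast
    qed
    have Xin: "X \<in> {Z\<in>P. Z \<subseteq> F - C}" using XP XF XC by blast
    have fin: "finite {Z\<in>P. Z \<subseteq> F - C}" using finP by simp
    have lt: "card {Z\<in>P. Z \<subseteq> F - (C \<union> X)} < n"
      unfolding setEq less.prems(1) using card_Diff1_less[OF fin Xin] .
    obtain Fs where Fs: "distinct Fs" "set Fs = {Z\<in>P. Z \<subseteq> F - (C \<union> X)}"
      "\<forall>i<length Fs.
                 sym_mergeable r G A B (C \<union> X \<union> \<Union>(set (take i Fs))) (Fs ! i) \<and>
                 C \<union> X \<union> \<Union>(set (take (Suc i) Fs)) \<in> partial_clusters r G P A B"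
      using less.IH[OF lt refl C'M C'F] by blast
    show ?thesis
    proof (intro exI[of _ "X # Fs"] conjI allI impI)
      show "distinct (X # Fs)" using Fs(1,2) ne[OF XP] by auto
      show "set (X # Fs) = {Z\<in>P. Z \<subseteq> F - C}" using Fs(2) setEq Xin by auto
      fix i assume i: "i < length (X # Fs)"
      show "sym_mergeable r G A B (C \<union> \<Union>(set (take i (X # Fs)))) ((X # Fs) ! i)"
      proof (cases i)
        case 0 then show ?thesis using sm by simp
      next
        case (Suc j)
        then have "j < length Fs" using i by simp
        then show ?thesis using Fs(3) Suc by (simp add: Un_assoc)
      qed
      show "C \<union> \<Union>(set (take (Suc i) (X # Fs))) \<in> partial_clusters r G P A B"
      proof (cases i)
        case 0 then show ?thesis using C'M by simp
      next
        case (Suc j)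
        then have "j < length Fs" using i by simp
        then show ?thesis using Fs(3) Suc by (simp add: Un_assoc)
      qed
    qed
  qed
qed

theorem lemma5p2:
  fixes r :: nat and G :: "'v set set" and P :: "'v set set set" and A B :: "nat set"
  assumes "r_graph r G"
    and "edge_partition G P"
    and "\<forall>F\<in>partial_clusters r G P A B. \<forall>H\<in>partial_clusters r G P A B.
           mergeable r G A B F H \<longrightarrow>
           (\<exists>F'\<in>P. \<exists>H'\<in>P. F' \<subseteq> F \<and> H' \<subseteq> H \<and> mergeable r G A B F' H')"
  shows "\<forall>F\<in>partial_clusters r G P A B. \<forall>F0\<in>partial_clusters r G P A B. F0 \<subseteq> F \<longrightarrow>
           (\<exists>Fs. distinct Fs \<and> set Fs = {X\<in>P. X \<subseteq> F - F0} \<and>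
              (\<forall>i<length Fs.
                 sym_mergeable r G A B (F0 \<union> \<Union>(set (take i Fs))) (Fs ! i) \<and>
                 F0 \<union> \<Union>(set (take (Suc i) Fs)) \<in> partial_clusters r G P A B))"
  using greedy[OF assms(1,2) _ assms(3) refl] by blast

end
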